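(* For each of the four possibilities (the noncentered operator $\mathcal M_{\mathfrak X}$ does / does not possess the dichotomy property, and the centered operator $\mathcal M^{\rm c}_{\mathfrak X}$ does / does not possess the dichotomy property) there exists a nondoubling metric measure space $\mathfrak X$ realizing it.
   Context: Metric measure space $(X,\rho,\mu)$: nonempty set, metric, nonnegative Borel measure with $\mu(B)\in(0,\infty)$ for each open ball $B$; doubling means $\mu(B(x,2s))\le C\mu(B(x,s))$ uniformly. $L^1_{\rm loc}(\mu)$: functions integrable on every open ball. $\mathcal M^{\rm c}f(x)=\sup_{s>0}\mu(B(x,s))^{-1}\int_{B(x,s)}|f|d\mu$, $\mathcal Mf(x)=\sup_{B\ni x}\mu(B)^{-1}\int_B|f|d\mu$. $\mathcal M$ possesses the dichotomy property if for every $f\in L^1_{\rm loc}(\mu)$ either $\mu(\{\mathcal Mf=\infty\})=0$ or $\{\mathcal Mf=\infty\}=X$; analogously for $\mathcal M^{\rm c}$. *)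

theory Defs
  imports "HOL-Analysis.Analysis"
begin

definition metric_borel :: "'a set \<Rightarrow> ('a \<Rightarrow> 'a \<Rightarrow> real) \<Rightarrow> 'a set set" where
  "metric_borel X rho = sigma_sets X {U. openin (Metric_space.mtopology X rho) U}"

definition metric_measure_space :: "'a set \<Rightarrow> ('a \<Rightarrow> 'a \<Rightarrow> real) \<Rightarrow> 'a measure \<Rightarrow> bool" where
  "metric_measure_space X rho mu \<longleftrightarrow>
     X \<noteq> {} \<and> Metric_space X rho \<and> space mu = X \<and> sets mu = metric_borel X rho \<and>
     (\<forall>x\<in>X. \<forall>s>0. 0 < emeasure mu (Metric_space.mball X rho x s) \<and>
                    emeasure mu (Metric_space.mball X rho x s) < \<infinity>)"

definition doubling :: "'a set \<Rightarrow> ('a \<Rightarrow> 'a \<Rightarrow> real) \<Rightarrow> 'a measure \<Rightarrow> bool" where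
  "doubling X rho mu \<longleftrightarrow> (\<exists>C::real. \<forall>x\<in>X. \<forall>s::real. 0 < s \<longrightarrow>
     emeasure mu (Metric_space.mball X rho x (2 * s)) \<le> ennreal C * emeasure mu (Metric_space.mball X rho x s))"

definition L1loc :: "'a set \<Rightarrow> ('a \<Rightarrow> 'a \<Rightarrow> real) \<Rightarrow> 'a measure \<Rightarrow> ('a \<Rightarrow> real) set" where
  "L1loc X rho mu = {f. f \<in> borel_measurable mu \<and>
     (\<forall>x\<in>X. \<forall>s>0. (\<integral>\<^sup>+ y. ennreal \<bar>f y\<bar> * indicator (Metric_space.mball X rho x s) y \<partial>mu) < \<infinity>)}"

definition ball_avg :: "'a measure \<Rightarrow> 'a set \<Rightarrow> ('a \<Rightarrow> real) \<Rightarrow> ennreal" where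
  "ball_avg mu B f = (\<integral>\<^sup>+ y. ennreal \<bar>f y\<bar> * indicator B y \<partial>mu) / emeasure mu B"

definition maxc :: "'a set \<Rightarrow> ('a \<Rightarrow> 'a \<Rightarrow> real) \<Rightarrow> 'a measure \<Rightarrow> ('a \<Rightarrow> real) \<Rightarrow> 'a \<Rightarrow> ennreal" where
  "maxc X rho mu f x = (SUP s\<in>{s::real. 0 < s}. ball_avg mu (Metric_space.mball X rho x s) f)"

definition maxnc :: "'a set \<Rightarrow> ('a \<Rightarrow> 'a \<Rightarrow> real) \<Rightarrow> 'a measure \<Rightarrow> ('a \<Rightarrow> real) \<Rightarrow> 'a \<Rightarrow> ennreal" where
  "maxnc X rho mu f x = (SUP (y,s)\<in>{(y,s). y \<in> X \<and> 0 < s \<and> x \<in> Metric_space.mball X rho y s}.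
       ball_avg mu (Metric_space.mball X rho y s) f)"

definition dichotomy :: "'a set \<Rightarrow> ('a \<Rightarrow> 'a \<Rightarrow> real) \<Rightarrow> 'a measure \<Rightarrow>
    (('a \<Rightarrow> real) \<Rightarrow> 'a \<Rightarrow> ennreal) \<Rightarrow> bool" where
  "dichotomy X rho mu T \<longleftrightarrow> (\<forall>f\<in>L1loc X rho mu.
     (\<exists>N\<in>null_sets mu. {x\<in>X. T f x = \<infinity>} \<subseteq> N) \<or> {x\<in>X. T f x = \<infinity>} = X)"

end

theory Submission
  imports Defs
begin


definition lvl :: "nat \<Rightarrow> nat" where "lvl n = n div 2"
definition dd :: "(nat\<Rightarrow>nat\<Rightarrow>real) \<Rightarrow> nat \<Rightarrow> nat \<Rightarrow> real" where
 "dd c i j = (if i = j then 0 else 2 * real (max (lvl i) (lvl j)) + 2 + c i j)"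
definition idx :: "real \<Rightarrow> nat" where "idx x = nat \<lfloor>x\<rfloor>"
definition XX :: "real set" where "XX = range real"
definition rh :: "(nat\<Rightarrow>nat\<Rightarrow>real) \<Rightarrow> real \<Rightarrow> real \<Rightarrow> real" where "rh c x y = dd c (idx x) (idx y)"
definition muN :: "(nat \<Rightarrow> real) \<Rightarrow> real measure" where
  "muN m = point_measure XX (\<lambda>x. ennreal (m (idx x)))"
definition NB :: "(nat\<Rightarrow>nat\<Rightarrow>real) \<Rightarrow> nat \<Rightarrow> real \<Rightarrow> nat set" where "NB c i s = {j. dd c i j < s}"
definition good :: "(nat\<Rightarrow>nat\<Rightarrow>real) \<Rightarrow> bool" where
  "good c \<longleftrightarrow> (\<forall>i j. c i j = c j i) \<and> (\<forall>i j. 0 \<le> c i j \<and> c i j \<le> 1)"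

lemma idx_real[simp]: "idx (real n) = n" by (simp add: idx_def)
lemma XX_iff: "x \<in> XX \<longleftrightarrow> (\<exists>n. x = real n)" by (auto simp: XX_def)
lemma real_in_XX[simp]: "real n \<in> XX" by (simp add: XX_def)

lemma dd_ge: "good c \<Longrightarrow> i \<noteq> j \<Longrightarrow> 2 * real (max (lvl i) (lvl j)) + 2 \<le> dd c i j"
  by (simp add: dd_def good_def)
lemma dd_le: "good c \<Longrightarrow> i \<noteq> j \<Longrightarrow> dd c i j \<le> 2 * real (max (lvl i) (lvl j)) + 3"
  by (simp add: dd_def good_def)
lemma dd_nonneg: "good c \<Longrightarrow> 0 \<le> dd c i j"
  by (simp add: dd_def good_def add_nonneg_nonneg)
lemma dd_sym: "good c \<Longrightarrow> dd c i j = dd c j i"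
  by (simp add: dd_def good_def max.commute)
lemma dd_self[simp]: "dd c i i = 0" by (simp add: dd_def)

lemma dd_tri: assumes "good c" shows "dd c i k \<le> dd c i j + dd c j k"
proof (cases "i = k")
  case True thus ?thesis using dd_nonneg[OF assms] by (simp add: add_nonneg_nonneg)
next
  case ik: False
  show ?thesis
  proof (cases "j = i \<or> j = k")
    case True thus ?thesis using dd_nonneg[OF assms] by auto
  next
    case False
    have "dd c i k \<le> 2 * real (max (lvl i) (lvl k)) + 3" using dd_le[OF assms ik] .
    moreover have "2 * real (max (lvl i) (lvl j)) + 2 \<le> dd c i j" using dd_ge[OF assms, of i j] False by auto
    moreover have "2 * real (max (lvl j) (lvl k)) + 2 \<le> dd c j k" using dd_ge[OF assms, of j k] False by auto
    moreover have "real (max (lvl i) (lvl k)) \<le> real (max (lvl i) (lvl j)) + real (max (lvl j) (lvl k))"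
      by auto
    ultimately show ?thesis by linarith
  qed
qed

lemma metric: assumes "good c" shows "Metric_space XX (rh c)"
proof
  fix x y show "0 \<le> rh c x y" by (simp add: rh_def dd_nonneg[OF assms])
  show "rh c x y = rh c y x" by (simp add: rh_def dd_sym[OF assms])
next
  fix x y assume "x \<in> XX" "y \<in> XX"
  then obtain a b where "x = real a" "y = real b" by (auto simp: XX_iff)
  moreover have "a \<noteq> b \<Longrightarrow> dd c a b \<noteq> 0" using dd_ge[OF assms, of a b] by simp
  ultimately show "(rh c x y = 0) = (x = y)" by (auto simp: rh_def)
next
  fix x y z show "rh c x z \<le> rh c x y + rh c y z" by (simp add: rh_def dd_tri[OF assms])
qed

lemma NB_finite: assumes "good c" shows "finite (NB c i s)"
proof -
  have "NB c i s \<subseteq> {..i} \<union> {j. real j < s + 1}"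
  proof
    fix j assume j: "j \<in> NB c i s"
    show "j \<in> {..i} \<union> {j. real j < s + 1}"
    proof (cases "j = i")
      case False
      have "2 * real (max (lvl i) (lvl j)) + 2 \<le> dd c i j" using dd_ge[OF assms, of i j] False by auto
      moreover have "real j \<le> 2 * real (lvl j) + 1" unfolding lvl_def by linarith
      ultimately show ?thesis using j by (auto simp: NB_def)
    qed simp
  qed
  moreover have "finite {j::nat. real j < s + 1}"
    by (rule finite_subset[of _ "{..nat \<lceil>s+1\<rceil>}"]) (auto, linarith)
  ultimately show ?thesis by (meson finite_Un finite_atMost finite_subset)
qed

lemma mball_eq: "good c \<Longrightarrow> Metric_space.mball XX (rh c) (real i) s = real ` NB c i s"
  by (auto simp: Metric_space.mball_def[OF metric] NB_def rh_def XX_iff)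



lemma NB_single: assumes "good c" shows "NB c i 1 = {i}"
proof -
  have "j \<noteq> i \<Longrightarrow> \<not> dd c i j < 1" for j using dd_ge[OF assms, of i j] by auto
  thus ?thesis by (auto simp: NB_def)
qed

lemma i_in_NB: "0 < s \<Longrightarrow> i \<in> NB c i s" by (simp add: NB_def)

lemma borel_eq: assumes "good c" shows "metric_borel XX (rh c) = Pow XX"
proof
  interpret M: Metric_space XX "rh c" by (rule metric[OF assms])
  show "metric_borel XX (rh c) \<subseteq> Pow XX"
  proof
    fix x assume "x \<in> metric_borel XX (rh c)"
    hence "x \<subseteq> XX" unfolding metric_borel_def
      by (rule sigma_sets_into_sp[rotated]) (metis (no_types, lifting) M.topspace_mtopology Pow_iff mem_Collect_eq openin_subset subsetI)
    thus "x \<in> Pow XX" by simp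
  qed
  show "Pow XX \<subseteq> metric_borel XX (rh c)"
  proof
    fix A assume "A \<in> Pow XX"
    hence A: "A = (\<Union>n. if real n \<in> A then {real n} else {})"
      unfolding XX_def by (auto split: if_splits)
    have "(if real n \<in> A then {real n} else {}) \<in> metric_borel XX (rh c)" for n
    proof (cases "real n \<in> A")
      case True
      have "{real n} = M.mball (real n) 1" using mball_eq[OF assms, of n 1] NB_single[OF assms] by simp
      hence "openin M.mtopology {real n}" by simp
      thus ?thesis using True unfolding metric_borel_def by (auto intro: sigma_sets.Basic)
    next
      case False thus ?thesis unfolding metric_borel_def by (auto intro: sigma_sets.Empty)
    qed
    hence "(\<Union>n. if real n \<in> A then {real n} else {}) \<in> metric_borel XX (rh c)"
      unfolding metric_borel_def by (intro sigma_sets.Union) auto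
    thus "A \<in> metric_borel XX (rh c)" using A by simp
  qed
qed

lemma space_mu[simp]: "space (muN m) = XX" and sets_mu[simp]: "sets (muN m) = Pow XX"
  by (auto simp: muN_def space_point_measure sets_point_measure)

lemma emeasure_mu: assumes "finite A" shows "emeasure (muN m) (real ` A) = ennreal (\<Sum>j\<in>A. max 0 (m j))"
proof -
  have "emeasure (muN m) (real ` A) = (\<Sum>x\<in>real ` A. ennreal (m (idx x)))"
    unfolding muN_def by (rule emeasure_point_measure_finite2) (auto simp: assms)
  also have "\<dots> = (\<Sum>j\<in>A. ennreal (m j))" by (subst sum.reindex) (auto simp: inj_on_def)
  also have "\<dots> = (\<Sum>j\<in>A. ennreal (max 0 (m j)))" by (intro sum.cong) (auto simp: ennreal_max_0)
  also have "\<dots> = ennreal (\<Sum>j\<in>A. max 0 (m j))" by (rule sum_ennreal) auto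
  finally show ?thesis .
qed

lemma nn_integral_mu: assumes "finite A"
  shows "(\<integral>\<^sup>+ y. ennreal \<bar>f y\<bar> * indicator (real ` A) y \<partial>muN m) = ennreal (\<Sum>j\<in>A. \<bar>f (real j)\<bar> * max 0 (m j))"
proof -
  let ?g = "\<lambda>y. ennreal \<bar>f y\<bar> * indicator (real ` A) y"
  let ?w = "\<lambda>x. ennreal (m (idx x))"
  have fin: "finite {a \<in> XX. 0 < ?w a \<and> 0 < ?g a}"
    by (rule finite_subset[of _ "real ` A"]) (auto simp: assms split: split_indicator)
  have "integral\<^sup>N (muN m) ?g = (\<Sum>a | a \<in> XX \<and> 0 < ?w a \<and> 0 < ?g a. ?w a * ?g a)"
    unfolding muN_def by (rule nn_integral_point_measure[OF fin])
  also have "\<dots> = (\<Sum>a\<in>real ` A. ?w a * ?g a)"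
    by (rule sum.mono_neutral_left) (auto simp: assms XX_iff ennreal_eq_0_iff not_le split: split_indicator)
  also have "\<dots> = (\<Sum>j\<in>A. ennreal (\<bar>f (real j)\<bar> * max 0 (m j)))"
    by (subst sum.reindex) (auto simp: inj_on_def ennreal_mult'' ennreal_max_0 mult.commute intro!: sum.cong)
  also have "\<dots> = ennreal (\<Sum>j\<in>A. \<bar>f (real j)\<bar> * max 0 (m j))" by (rule sum_ennreal) auto
  finally show ?thesis .
qed



definition SS :: "(real\<Rightarrow>real) \<Rightarrow> (nat\<Rightarrow>real) \<Rightarrow> nat set \<Rightarrow> real" where
  "SS f m A = (\<Sum>j\<in>A. \<bar>f (real j)\<bar> * m j)"
definition MM :: "(nat\<Rightarrow>real) \<Rightarrow> nat set \<Rightarrow> real" where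
  "MM m A = (\<Sum>j\<in>A. m j)"
definition avgN :: "(real\<Rightarrow>real) \<Rightarrow> (nat\<Rightarrow>real) \<Rightarrow> nat set \<Rightarrow> ennreal" where
  "avgN f m A = ennreal (SS f m A / MM m A)"

definition pos :: "(nat \<Rightarrow> real) \<Rightarrow> bool" where "pos m \<longleftrightarrow> (\<forall>j. 0 < m j)"

lemma pos_ge: "pos m \<Longrightarrow> 0 \<le> m j" unfolding pos_def using less_imp_le by blast
lemma pos_max: "pos m \<Longrightarrow> max 0 (m j) = m j" using pos_ge[of m j] by linarith

lemma MM_pos: "pos m \<Longrightarrow> finite A \<Longrightarrow> A \<noteq> {} \<Longrightarrow> 0 < MM m A"
  unfolding MM_def pos_def by (intro sum_pos) auto

lemma ball_avg_eq: assumes "pos m" "finite A" "A \<noteq> {}"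
  shows "ball_avg (muN m) (real ` A) f = avgN f m A"
proof -
  have I: "(\<integral>\<^sup>+ y. ennreal \<bar>f y\<bar> * indicator (real ` A) y \<partial>muN m) = ennreal (SS f m A)"
    using nn_integral_mu[OF assms(2)] pos_max[OF assms(1)] by (simp add: SS_def)
  have E: "emeasure (muN m) (real ` A) = ennreal (MM m A)"
    using emeasure_mu[OF assms(2)] pos_max[OF assms(1)] by (simp add: MM_def)
  have "0 \<le> SS f m A" unfolding SS_def using pos_ge[OF assms(1)] by (intro sum_nonneg) simp
  thus ?thesis unfolding ball_avg_def avgN_def I E using MM_pos[OF assms] by (simp add: divide_ennreal)
qed

lemma mms: assumes "good c" "pos m" shows "metric_measure_space XX (rh c) (muN m)"
  unfolding metric_measure_space_def
proof (intro conjI ballI allI impI)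
  show "XX \<noteq> {}" by (auto simp: XX_def)
  show "Metric_space XX (rh c)" by (rule metric[OF assms(1)])
  show "space (muN m) = XX" by simp
  show "sets (muN m) = metric_borel XX (rh c)" using borel_eq[OF assms(1)] by simp
  fix x and s :: real assume x: "x \<in> XX" and s: "0 < s"
  then obtain i where i: "x = real i" by (auto simp: XX_iff)
  have mx: "max 0 (m j) = m j" for j using pos_max[OF assms(2)] .
  have eq: "emeasure (muN m) (Metric_space.mball XX (rh c) x s) = ennreal (MM m (NB c i s))"
    using i mball_eq[OF assms(1)] emeasure_mu[OF NB_finite[OF assms(1)]] by (simp add: mx MM_def)
  have "0 < MM m (NB c i s)" using MM_pos[OF assms(2) NB_finite[OF assms(1)]] i_in_NB[OF s] by blast
  thus "0 < emeasure (muN m) (Metric_space.mball XX (rh c) x s)" using eq by simp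
  show "emeasure (muN m) (Metric_space.mball XX (rh c) x s) < \<infinity>" using eq by simp
qed

lemma L1loc_all: assumes "good c" "pos m" shows "f \<in> L1loc XX (rh c) (muN m)"
  unfolding L1loc_def
proof (intro CollectI conjI ballI allI impI)
  show "f \<in> borel_measurable (muN m)" by (simp add: muN_def)
  fix x and s :: real assume x: "x \<in> XX" and s: "0 < s"
  then obtain i where i: "x = real i" by (auto simp: XX_iff)
  show "(\<integral>\<^sup>+ y. ennreal \<bar>f y\<bar> * indicator (Metric_space.mball XX (rh c) x s) y \<partial>muN m) < \<infinity>"
    using i mball_eq[OF assms(1)] nn_integral_mu[OF NB_finite[OF assms(1)]] by simp
qed

lemma dich_holds: assumes "good c" "pos m"
  and H: "\<And>f i j. T f (real i) = \<infinity> \<Longrightarrow> T f (real j) = \<infinity>"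
  shows "dichotomy XX (rh c) (muN m) T"
  unfolding dichotomy_def
proof
  fix f assume "f \<in> L1loc XX (rh c) (muN m)"
  show "(\<exists>N\<in>null_sets (muN m). {x \<in> XX. T f x = \<infinity>} \<subseteq> N) \<or> {x \<in> XX. T f x = \<infinity>} = XX"
  proof (cases "\<exists>i. T f (real i) = \<infinity>")
    case True
    then obtain i where "T f (real i) = \<infinity>" by blast
    hence "T f (real j) = \<infinity>" for j by (rule H)
    hence "{x \<in> XX. T f x = \<infinity>} = XX" unfolding XX_def by auto
    thus ?thesis by (rule disjI2)
  next
    case False
    hence "{x \<in> XX. T f x = \<infinity>} = {}" unfolding XX_def by auto
    thus ?thesis by auto
  qed
qed

lemma dich_fails: assumes "good c" "pos m"
  and "T f (real i) = \<infinity>" "T f (real j) \<noteq> \<infinity>"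
  shows "\<not> dichotomy XX (rh c) (muN m) T"
proof
  assume d: "dichotomy XX (rh c) (muN m) T"
  have "f \<in> L1loc XX (rh c) (muN m)" by (rule L1loc_all[OF assms(1,2)])
  with d have "(\<exists>N\<in>null_sets (muN m). {x \<in> XX. T f x = \<infinity>} \<subseteq> N) \<or> {x \<in> XX. T f x = \<infinity>} = XX"
    unfolding dichotomy_def by (rule bspec)
  thus False
  proof
    assume "\<exists>N\<in>null_sets (muN m). {x \<in> XX. T f x = \<infinity>} \<subseteq> N"
    then obtain N where N: "N \<in> null_sets (muN m)" "{x \<in> XX. T f x = \<infinity>} \<subseteq> N" by blast
    have "real i \<in> {x \<in> XX. T f x = \<infinity>}" using assms(3) by simp
    hence "real i \<in> N" by (rule subsetD[OF N(2)])
    moreover have "\<forall>x\<in>N. ennreal (m (idx x)) = 0" using N(1) unfolding muN_def null_sets_point_measure_iff by blast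
    ultimately have "ennreal (m i) = 0" by force
    moreover have "0 < m i" using assms(2) unfolding pos_def by blast
    ultimately show False by (simp add: ennreal_eq_0_iff)
  next
    assume e: "{x \<in> XX. T f x = \<infinity>} = XX"
    have "real j \<in> {x \<in> XX. T f x = \<infinity>}" unfolding e by simp
    thus False using assms(4) by simp
  qed
qed



definition Fc :: "(nat\<Rightarrow>nat\<Rightarrow>real) \<Rightarrow> nat \<Rightarrow> nat set set" where
  "Fc c i = (NB c i) ` {s. 0 < s}"
definition Fn :: "(nat\<Rightarrow>nat\<Rightarrow>real) \<Rightarrow> nat \<Rightarrow> nat set set" where
  "Fn c i = (\<lambda>(j,s). NB c j s) ` {(j,s). 0 < s \<and> i \<in> NB c j s}"

lemma maxc_eq: assumes "good c" "pos m"
  shows "maxc XX (rh c) (muN m) f (real i) = (SUP A\<in>Fc c i. avgN f m A)"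
proof -
  have "maxc XX (rh c) (muN m) f (real i) = (SUP s\<in>{s. 0 < s}. avgN f m (NB c i s))"
    unfolding maxc_def
  proof (intro SUP_cong refl)
    fix s assume "s \<in> {s::real. 0 < s}"
    hence "NB c i s \<noteq> {}" using i_in_NB by blast
    thus "ball_avg (muN m) (Metric_space.mball XX (rh c) (real i) s) f = avgN f m (NB c i s)"
      by (simp add: mball_eq[OF assms(1)] ball_avg_eq[OF assms(2) NB_finite[OF assms(1)]])
  qed
  thus ?thesis unfolding Fc_def by (simp add: image_image)
qed

lemma maxnc_eq: assumes "good c" "pos m"
  shows "maxnc XX (rh c) (muN m) f (real i) = (SUP A\<in>Fn c i. avgN f m A)"
proof -
  let ?S = "{(j,s). 0 < s \<and> i \<in> NB c j s}"
  have S: "{(y,s). y \<in> XX \<and> 0 < s \<and> real i \<in> Metric_space.mball XX (rh c) y s} = (\<lambda>(j,s). (real j, s)) ` ?S"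
    by (auto simp: mball_eq[OF assms(1)] XX_iff image_iff)
  have "maxnc XX (rh c) (muN m) f (real i) = (SUP p\<in>?S. avgN f m (NB c (fst p) (snd p)))"
    unfolding maxnc_def S image_image
  proof (intro SUP_cong refl)
    fix p assume "p \<in> ?S"
    then obtain j s where p: "p = (j,s)" "0 < s" by auto
    have "NB c j s \<noteq> {}" using i_in_NB[OF p(2)] by blast
    thus "(case case p of (j, s) \<Rightarrow> (real j, s) of (y, s) \<Rightarrow> ball_avg (muN m) (Metric_space.mball XX (rh c) y s) f)
         = avgN f m (NB c (fst p) (snd p))"
      using p by (simp add: mball_eq[OF assms(1)] ball_avg_eq[OF assms(2) NB_finite[OF assms(1)]])
  qed
  also have "\<dots> = (SUP A\<in>Fn c i. avgN f m A)"
    unfolding Fn_def image_image by (intro SUP_cong refl) auto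
  finally show ?thesis .
qed

lemma SS_nonneg: "pos m \<Longrightarrow> 0 \<le> SS f m A"
  unfolding SS_def by (intro sum_nonneg mult_nonneg_nonneg) (auto simp: pos_ge)
lemma SS_mono: "pos m \<Longrightarrow> finite B \<Longrightarrow> A \<subseteq> B \<Longrightarrow> SS f m A \<le> SS f m B"
  unfolding SS_def by (intro sum_mono2) (auto simp: pos_ge)
lemma MM_mono: "pos m \<Longrightarrow> finite B \<Longrightarrow> A \<subseteq> B \<Longrightarrow> MM m A \<le> MM m B"
  unfolding MM_def by (intro sum_mono2) (auto simp: pos_ge)
lemma MM_single: "pos m \<Longrightarrow> finite A \<Longrightarrow> i \<in> A \<Longrightarrow> m i \<le> MM m A"
  unfolding MM_def by (rule member_le_sum) (auto simp: pos_ge)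

lemma propag:
  assumes pm: "pos m" and fin: "\<And>A. A \<in> F i \<Longrightarrow> finite A \<and> i \<in> A"
    and finj: "\<And>A. A \<in> F j \<Longrightarrow> finite A \<and> A \<noteq> {}"
    and D: "finite D" and Cp: "0 < C"
    and H: "\<And>A. A \<in> F i \<Longrightarrow> A \<subseteq> D \<or> (\<exists>A'\<in>F j. A \<subseteq> A' \<and> MM m A' \<le> C * MM m A)"
    and inf: "(SUP A\<in>F i. avgN f m A) = \<infinity>"
  shows "(SUP A\<in>F j. avgN f m A) = \<infinity>"
proof (rule ccontr)
  assume "(SUP A\<in>F j. avgN f m A) \<noteq> \<infinity>"
  then obtain V where V: "(SUP A\<in>F j. avgN f m A) = ennreal V" "0 \<le> V"
    using ennreal_cases by (metis ennreal_cases top.not_eq_extremum infinity_ennreal_def)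
  have mi: "0 < m i" using pm by (simp add: pos_def)
  let ?K = "max (SS f m D / m i) (C * V)"
  have "avgN f m A \<le> ennreal ?K" if A: "A \<in> F i" for A
  proof -
    have fA: "finite A" "i \<in> A" using fin[OF A] by auto
    have MA: "m i \<le> MM m A" by (rule MM_single[OF pm fA(1,2)])
    have MApos: "0 < MM m A" using mi MA by linarith
    from H[OF A] show ?thesis
    proof
      assume "A \<subseteq> D"
      hence "SS f m A \<le> SS f m D" by (rule SS_mono[OF pm D])
      hence "SS f m A / MM m A \<le> SS f m D / m i"
        using MA mi SS_nonneg[OF pm, of f A] by (meson frac_le order_trans SS_nonneg[OF pm])
      thus ?thesis unfolding avgN_def by (intro ennreal_leI) linarith
    next
      assume "\<exists>A'\<in>F j. A \<subseteq> A' \<and> MM m A' \<le> C * MM m A"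
      then obtain A' where A': "A' \<in> F j" "A \<subseteq> A'" "MM m A' \<le> C * MM m A" by blast
      have fA': "finite A'" "A' \<noteq> {}" using finj[OF A'(1)] by auto
      have M'pos: "0 < MM m A'" by (rule MM_pos[OF pm fA'])
      have "avgN f m A' \<le> ennreal V" using A'(1) V(1) by (metis SUP_upper)
      hence le: "SS f m A' / MM m A' \<le> V" unfolding avgN_def using V(2) by (simp add: ennreal_le_iff)
      have SA: "SS f m A \<le> SS f m A'" by (rule SS_mono[OF pm fA'(1) A'(2)])
      have "SS f m A / MM m A \<le> SS f m A' / MM m A" using SA MApos by (simp add: divide_right_mono)
      also have "\<dots> \<le> C * (SS f m A' / MM m A')"
      proof -
        have "SS f m A' * MM m A' \<le> C * SS f m A' * MM m A"
          using A'(3) SS_nonneg[OF pm, of f A'] by (metis mult.assoc mult.commute mult_left_mono)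
        thus ?thesis using MApos M'pos by (simp add: field_simps)
      qed
      also have "\<dots> \<le> C * V" by (rule mult_left_mono[OF le]) (use Cp in simp)
      finally show ?thesis unfolding avgN_def by (intro ennreal_leI) linarith
    qed
  qed
  hence "(SUP A\<in>F i. avgN f m A) \<le> ennreal ?K" by (rule SUP_least)
  hence "\<infinity> \<le> ennreal ?K" using inf by simp
  thus False by (simp add: top_unique)
qed



lemma lvl_lt: "lvl j < K \<longleftrightarrow> j < 2*K" unfolding lvl_def by auto
lemma lvl_le: "lvl j \<le> K \<longleftrightarrow> j < 2*K+2" unfolding lvl_def by auto

lemma dd_ne: "i \<noteq> j \<Longrightarrow> dd c i j = 2 * real (max (lvl i) (lvl j)) + 2 + c i j"
  by (simp add: dd_def)

lemma Lball: assumes "good c" "lvl y \<le> K" shows "NB c y (2*K+4) = {..<2*K+2}"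
proof (intro set_eqI iffI)
  fix w assume w: "w \<in> NB c y (2*K+4)"
  show "w \<in> {..<2*K+2}"
  proof (cases "w = y")
    case True thus ?thesis using assms(2) by (simp add: lvl_le)
  next
    case False
    hence "2 * real (max (lvl y) (lvl w)) + 2 < 2*K+4" using w dd_ge[OF assms(1) False[symmetric]] by (simp add: NB_def)
    hence "lvl w \<le> K" by linarith
    thus ?thesis by (simp add: lvl_le)
  qed
next
  fix w assume w: "w \<in> {..<2*K+2}"
  show "w \<in> NB c y (2*K+4)"
  proof (cases "w = y")
    case True thus ?thesis by (simp add: NB_def)
  next
    case False
    have "lvl w \<le> K" using w by (simp add: lvl_le)
    hence "2 * real (max (lvl y) (lvl w)) + 3 < 2*K+4" using assms(2) by simp
    thus ?thesis using dd_le[OF assms(1), of y w] False by (simp add: NB_def)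
  qed
qed

lemma sandwich: assumes "good c" "0 < s" "NB c k s \<subseteq> {..<2*K+2}" "z \<in> NB c k s" "lvl z = K"
  shows "{..<2*K} \<subseteq> NB c k s \<or> (lvl k = K \<and> s \<le> 2*K+3)"
proof (rule disjCI)
  assume n: "\<not> (lvl k = K \<and> s \<le> 2*K+3)"
  have kA: "k \<in> NB c k s" using assms(2) by (simp add: NB_def)
  hence lk: "lvl k \<le> K" using assms(3) by (auto simp: lvl_le)
  show "{..<2*K} \<subseteq> NB c k s"
  proof
    fix w assume "w \<in> {..<2*K}"
    hence lw: "lvl w < K" by (simp add: lvl_lt)
    show "w \<in> NB c k s"
    proof (cases "w = k")
      case True thus ?thesis using kA by simp
    next
      case wk: False
      have dw: "dd c k w \<le> 2 * real (max (lvl k) (lvl w)) + 3" using dd_le[OF assms(1)] wk by auto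
      show ?thesis
      proof (cases "s > 2*K+3")
        case True
        have "max (lvl k) (lvl w) \<le> K" using lk lw by simp
        hence "real (max (lvl k) (lvl w)) \<le> real K" by (simp only: of_nat_le_iff)
        hence "dd c k w < s" using dw True by linarith
        thus ?thesis by (simp add: NB_def)
      next
        case False
        hence lk2: "lvl k < K" using n lk by linarith
        hence zk: "z \<noteq> k" using assms(5) by auto
        have "2 * real (max (lvl k) (lvl z)) + 2 \<le> dd c k z" using dd_ge[OF assms(1)] zk by auto
        moreover have "dd c k z < s" using assms(4) by (simp add: NB_def)
        moreover have "max (lvl k) (lvl w) + 1 \<le> K" using lk2 lw by simp
        ultimately have "dd c k w < s" using dw assms(5) lk by (simp add: max_def split: if_splits; linarith)
        thus ?thesis by (simp add: NB_def)
      qed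
    qed
  qed
qed

lemma small: assumes "good c" "lvl k = K" "s \<le> 2*K+3" "w \<in> NB c k s" "w \<noteq> k"
  shows "lvl w \<le> K \<and> 2*K+2 + c k w < s"
proof -
  have d: "dd c k w = 2 * real (max K (lvl w)) + 2 + c k w" using dd_ne[OF assms(5)[symmetric]] assms(2) by simp
  have c0: "0 \<le> c k w" using assms(1) by (simp add: good_def)
  have lt: "dd c k w < s" using assms(4) by (simp add: NB_def)
  have "lvl w \<le> K"
  proof (rule ccontr)
    assume "\<not> lvl w \<le> K"
    hence "real (max K (lvl w)) \<ge> K + 1" by simp
    thus False using d c0 lt assms(3) by linarith
  qed
  thus ?thesis using d lt by (simp add: max_def)
qed

lemma maxlvl: assumes "finite A" "A \<noteq> {}"
  obtains K z where "A \<subseteq> {..<2*K+2}" "z \<in> A" "lvl z = K"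
proof -
  let ?K = "Max (lvl ` A)"
  have "?K \<in> lvl ` A" using assms by simp
  then obtain z where "z \<in> A" "lvl z = ?K" by auto
  moreover have "A \<subseteq> {..<2*?K+2}"
  proof
    fix x assume "x \<in> A"
    hence "lvl x \<le> ?K" using assms by simp
    thus "x \<in> {..<2*?K+2}" by (simp add: lvl_le)
  qed
  ultimately show ?thesis using that by blast
qed

definition mT :: "(nat \<Rightarrow> real) \<Rightarrow> nat \<Rightarrow> real" where
  "mT T j = (if j < 2 \<or> even j then 1 else T (j div 2 + 1) - T (j div 2) - 1)"

lemma mT_even: "even j \<Longrightarrow> mT T j = 1" by (simp add: mT_def)
lemma mT_odd: "k \<ge> 1 \<Longrightarrow> mT T (2*k+1) = T (k+1) - T k - 1" by (simp add: mT_def)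

lemma MM_lev: assumes "T 1 = 2" "K \<ge> 1" shows "MM (mT T) {..<2*K} = T K"
  using assms(2)
proof (induction K rule: dec_induct)
  case base
  have "{..<2::nat} = {0,1}" by auto
  thus ?case using assms(1) by (simp add: MM_def mT_def)
next
  case (step K)
  have "{..<2*Suc K} = insert (2*K+1) (insert (2*K) {..<2*K})" by auto
  hence "MM (mT T) {..<2*Suc K} = mT T (2*K+1) + mT T (2*K) + MM (mT T) {..<2*K}"
    by (simp add: MM_def)
  thus ?case using step mT_odd[OF step(1), of T] by (simp add: mT_even)
qed

lemma pos_mT: assumes "\<And>k. k \<ge> 1 \<Longrightarrow> T (k+1) - T k \<ge> 2" shows "pos (mT T)"
  unfolding pos_def
proof
  fix j show "0 < mT T j"
  proof (cases "j < 2 \<or> even j")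
    case True thus ?thesis by (simp add: mT_def)
  next
    case False
    define k where "k = j div 2"
    have k: "j = 2*k+1" "k \<ge> 1" using False unfolding k_def by presburger+
    thus ?thesis using assms[OF k(2)] mT_odd[OF k(2)] by simp
  qed
qed

lemma emeasure_NB: assumes "good c" "pos m"
  shows "emeasure (muN m) (Metric_space.mball XX (rh c) (real i) s) = ennreal (MM m (NB c i s))"
  using mball_eq[OF assms(1)] emeasure_mu[OF NB_finite[OF assms(1)]] pos_max[OF assms(2)]
  by (simp add: MM_def)

lemma nondoubling:
  assumes gc: "good c" and g2: "\<And>k. k \<ge> 1 \<Longrightarrow> T (k+1) - T k \<ge> 2"
    and gk: "\<And>k. k \<ge> 1 \<Longrightarrow> T (k+1) - T k \<ge> k"
  shows "\<not> doubling XX (rh c) (muN (mT T))"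
proof
  assume "doubling XX (rh c) (muN (mT T))"
  then obtain C :: real where C: "\<And>x s. x \<in> XX \<Longrightarrow> 0 < s \<Longrightarrow>
     emeasure (muN (mT T)) (Metric_space.mball XX (rh c) x (2 * s)) \<le> ennreal C * emeasure (muN (mT T)) (Metric_space.mball XX (rh c) x s)"
    unfolding doubling_def by blast
  define k where "k = nat \<lceil>C\<rceil> + 1"
  have k1: "k \<ge> 1" and kC: "real k > C" unfolding k_def by linarith+
  have pm: "pos (mT T)" by (rule pos_mT[of T, OF g2])
  let ?s = "2 * real k + 2"
  have N1: "NB c (2*k) ?s = {2*k}"
  proof (intro set_eqI iffI)
    fix w assume w: "w \<in> NB c (2*k) ?s"
    show "w \<in> {2*k}"
    proof (rule ccontr)
      assume "w \<notin> {2*k}"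
      hence "2 * real (max (lvl (2*k)) (lvl w)) + 2 \<le> dd c (2*k) w" using dd_ge[OF gc] by auto
      moreover have "lvl (2*k) = k" by (simp add: lvl_def)
      ultimately show False using w by (simp add: NB_def)
    qed
  qed (simp add: NB_def)
  have sub: "{2*k, 2*k+1} \<subseteq> NB c (2*k) (2 * ?s)"
  proof -
    have "dd c (2*k) (2*k+1) \<le> 2 * real (max (lvl (2*k)) (lvl (2*k+1))) + 3" using dd_le[OF gc] by auto
    moreover have "lvl (2*k) = k" "lvl (2*k+1) = k" by (simp_all add: lvl_def)
    ultimately have "dd c (2*k) (2*k+1) < 2 * ?s" by simp
    thus ?thesis by (simp add: NB_def)
  qed
  have "MM (mT T) {2*k, 2*k+1} \<le> MM (mT T) (NB c (2*k) (2 * ?s))"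
    by (rule MM_mono[OF pm NB_finite[OF gc] sub])
  moreover have "MM (mT T) {2*k, 2*k+1} = T (k+1) - T k"
    using mT_odd[OF k1, of T] by (simp add: MM_def mT_even)
  ultimately have big: "real k \<le> MM (mT T) (NB c (2*k) (2 * ?s))" using gk[OF k1] by linarith
  have "ennreal (MM (mT T) (NB c (2*k) (2 * ?s))) \<le> ennreal C * ennreal (MM (mT T) (NB c (2*k) ?s))"
  proof -
    have "emeasure (muN (mT T)) (Metric_space.mball XX (rh c) (real (2*k)) (2 * ?s)) \<le>
        ennreal C * emeasure (muN (mT T)) (Metric_space.mball XX (rh c) (real (2*k)) ?s)"
      by (rule C) (simp only: real_in_XX, simp)
    thus ?thesis unfolding emeasure_NB[OF gc pm] .
  qed
  also have "MM (mT T) (NB c (2*k) ?s) = 1" unfolding N1 by (simp add: MM_def mT_even)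
  finally have "ennreal (MM (mT T) (NB c (2*k) (2 * ?s))) \<le> ennreal C" by simp
  hence "MM (mT T) (NB c (2*k) (2 * ?s)) \<le> max C 0" unfolding ennreal_le_iff2 by auto
  moreover have "real k > max C 0" using kC k1 by simp
  ultimately show False using big by linarith
qed



definition cz :: "(nat \<Rightarrow> nat \<Rightarrow> bool) \<Rightarrow> nat \<Rightarrow> nat \<Rightarrow> real" where
  "cz z i j = (if z i j \<or> z j i then 0 else 1)"

lemma good_cz: "good (cz z)" unfolding good_def cz_def by auto

lemma Fn_elim: "A \<in> Fn c i \<Longrightarrow> \<exists>k s. 0 < s \<and> A = NB c k s \<and> i \<in> A"
  unfolding Fn_def by auto
lemma Fc_elim: "A \<in> Fc c i \<Longrightarrow> \<exists>s. 0 < s \<and> A = NB c i s"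
  unfolding Fc_def by auto
lemma Fc_elim2: "A \<in> Fc c i \<Longrightarrow> \<exists>k s. 0 < s \<and> A = NB c k s \<and> i \<in> A"
  unfolding Fc_def using i_in_NB by blast
lemma Fc_in: "0 < s \<Longrightarrow> NB c j s \<in> Fc c j" unfolding Fc_def by auto
lemma Fn_in: "0 < s \<Longrightarrow> i \<in> NB c j s \<Longrightarrow> NB c j s \<in> Fn c i" unfolding Fn_def by auto

lemma holdA:
  assumes gc: "good c" and pm: "pos m"
    and mass: "\<And>K. K \<ge> 1 \<Longrightarrow> MM m {..<2*K+2} \<le> 2 * MM m {..<2*K}"
    and hF: "\<And>i A. A \<in> F i \<Longrightarrow> \<exists>k s. 0 < s \<and> A = NB c k s \<and> i \<in> A"
    and hBall: "\<And>j K. lvl j \<le> K \<Longrightarrow> NB c j (2*K+4) \<in> F j"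
    and hQ: "\<And>i A K z. A \<in> F i \<Longrightarrow> A \<subseteq> {..<2*K+2} \<Longrightarrow> z \<in> A \<Longrightarrow> lvl z = K \<Longrightarrow> lvl i < K \<Longrightarrow> {..<2*K} \<subseteq> A"
    and inf: "(SUP A\<in>F i. avgN f m A) = \<infinity>"
  shows "(SUP A\<in>F j. avgN f m A) = \<infinity>"
proof -
  define M where "M = max (lvl i) (lvl j)"
  have fin: "finite A \<and> i \<in> A" if "A \<in> F i" for A i
    using hF[OF that] NB_finite[OF gc] by blast
  show ?thesis
  proof (rule propag[OF pm, of F i j "{..<2*M+2}" 2])
    show "finite A \<and> i \<in> A" if "A \<in> F i" for A using fin[OF that] .
    show "finite A \<and> A \<noteq> {}" if "A \<in> F j" for A using fin[OF that] by blast
    fix A assume A: "A \<in> F i"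
    show "A \<subseteq> {..<2*M+2} \<or> (\<exists>A'\<in>F j. A \<subseteq> A' \<and> MM m A' \<le> 2 * MM m A)"
    proof (cases "A \<subseteq> {..<2*M+2}")
      case True thus ?thesis by (rule disjI1)
    next
      case False
      hence nD: "\<not> A \<subseteq> {..<2*M+2}" .
      show ?thesis
      proof (rule disjI2)
      have fA: "finite A" "A \<noteq> {}" using fin[OF A] by auto
      obtain K z where K: "A \<subseteq> {..<2*K+2}" "z \<in> A" "lvl z = K" using maxlvl[OF fA] by blast
      from nD obtain w where w: "w \<in> A" "w \<notin> {..<2*M+2}" by blast
      have MK: "M < K" using w K(1) by auto
      have "lvl i < K" using MK unfolding M_def by simp
      hence sub: "{..<2*K} \<subseteq> A" by (rule hQ[OF A K])
      have jK: "lvl j \<le> K" using MK unfolding M_def by simp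
      have A': "NB c j (2*K+4) = {..<2*K+2}" by (rule Lball[OF gc jK])
      have K1: "K \<ge> 1" using MK by simp
      have "MM m {..<2*K+2} \<le> 2 * MM m {..<2*K}" by (rule mass[OF K1])
      also have "\<dots> \<le> 2 * MM m A" using MM_mono[OF pm fA(1) sub] by simp
      finally have mm: "MM m (NB c j (2*K+4)) \<le> 2 * MM m A" unfolding A' .
      show "\<exists>A'\<in>F j. A \<subseteq> A' \<and> MM m A' \<le> 2 * MM m A"
      proof (intro bexI conjI)
        show "A \<subseteq> NB c j (2*K+4)" unfolding A' by (rule K(1))
        show "MM m (NB c j (2*K+4)) \<le> 2 * MM m A" by (rule mm)
        show "NB c j (2*K+4) \<in> F j" by (rule hBall[OF jK])
      qed
    qed
    qed
  qed (auto simp: inf)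
qed

lemma hQ_Fc: assumes gc: "good c"
  shows "A \<in> Fc c i \<Longrightarrow> A \<subseteq> {..<2*K+2} \<Longrightarrow> z \<in> A \<Longrightarrow> lvl z = K \<Longrightarrow> lvl i < K \<Longrightarrow> {..<2*K} \<subseteq> A"
proof -
  assume A: "A \<in> Fc c i" and h: "A \<subseteq> {..<2*K+2}" "z \<in> A" "lvl z = K" "lvl i < K"
  obtain s where s: "0 < s" "A = NB c i s" using Fc_elim[OF A] by blast
  have "{..<2*K} \<subseteq> NB c i s \<or> (lvl i = K \<and> s \<le> 2*K+3)"
    by (rule sandwich[OF gc s(1)]) (use h s in auto)
  thus ?thesis using h(4) s(2) by auto
qed

lemma holdA_c:
  assumes gc: "good c" and pm: "pos m"
    and mass: "\<And>K. K \<ge> 1 \<Longrightarrow> MM m {..<2*K+2} \<le> 2 * MM m {..<2*K}"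
    and inf: "(SUP A\<in>Fc c i. avgN f m A) = \<infinity>"
  shows "(SUP A\<in>Fc c j. avgN f m A) = \<infinity>"
proof (rule holdA[where F="Fc c", OF gc pm mass _ _ _ inf])
  fix i A assume "A \<in> Fc c i" thus "\<exists>k s. 0 < s \<and> A = NB c k s \<and> i \<in> A" by (rule Fc_elim2)
next
  fix j and K :: nat show "NB c j (2*K+4) \<in> Fc c j" by (rule Fc_in) simp
next
  fix i A K z assume "A \<in> Fc c i" "A \<subseteq> {..<2*K+2}" "z \<in> A" "lvl z = K" "lvl i < K"
  thus "{..<2*K} \<subseteq> A" by (rule hQ_Fc[OF gc])
qed

definition TA :: "nat \<Rightarrow> real" where "TA k = 2 ^ k"
definition TB :: "nat \<Rightarrow> real" where "TB k = 2 * fact k"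

lemma TA1: "TA 1 = 2" and TB1: "TB 1 = 2" by (simp_all add: TA_def TB_def)

lemma TA_g2: "k \<ge> 1 \<Longrightarrow> TA (k+1) - TA k \<ge> 2"
proof -
  assume "k \<ge> 1"
  hence "(2::real) ^ 1 \<le> 2 ^ k" by (intro power_increasing) auto
  thus ?thesis by (simp add: TA_def)
qed
lemma TA_gk: "k \<ge> 1 \<Longrightarrow> TA (k+1) - TA k \<ge> k"
proof -
  have "real k < 2 ^ k"
  proof (induction k)
    case (Suc k)
    have "(1::real) \<le> 2 ^ k" by simp
    thus ?case using Suc.IH by (simp; linarith)
  qed simp
  thus ?thesis by (simp add: TA_def)
qed
lemma TB_diff: "TB (k+1) - TB k = 2 * k * fact k"
  by (simp add: TB_def algebra_simps)
lemma TB_g2: "k \<ge> 1 \<Longrightarrow> TB (k+1) - TB k \<ge> 2"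
proof -
  assume k: "k \<ge> 1"
  have "(1::real) \<le> fact k" by simp
  moreover have "(1::real) \<le> k" using k by simp
  ultimately have "1 * 1 \<le> real k * fact k" by (intro mult_mono) auto
  thus ?thesis unfolding TB_diff by simp
qed
lemma TB_gk: "k \<ge> 1 \<Longrightarrow> TB (k+1) - TB k \<ge> k"
proof -
  assume k: "k \<ge> 1"
  have "(1::real) \<le> fact k" by simp
  hence "real k \<le> real k * fact k" by (simp add: mult_le_cancel_left1)
  thus ?thesis unfolding TB_diff by simp
qed

lemma posA: "pos (mT TA)" by (rule pos_mT) (rule TA_g2)
lemma posB: "pos (mT TB)" by (rule pos_mT) (rule TB_g2)

lemma massA: "K \<ge> 1 \<Longrightarrow> MM (mT TA) {..<2*K+2} \<le> 2 * MM (mT TA) {..<2*K}"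
proof -
  assume K: "K \<ge> 1"
  have "MM (mT TA) {..<2*(K+1)} = TA (K+1)" by (rule MM_lev[of TA, OF TA1]) simp
  moreover have "MM (mT TA) {..<2*K} = TA K" by (rule MM_lev[of TA, OF TA1 K])
  ultimately show ?thesis by (simp add: TA_def)
qed



lemma cz_lt: "cz z i j < 1 \<Longrightarrow> z i j \<or> z j i" unfolding cz_def by (auto split: if_splits)
lemma cz_0: "z i j \<Longrightarrow> cz z i j = 0" unfolding cz_def by auto
lemma cz_0': "z j i \<Longrightarrow> cz z i j = 0" unfolding cz_def by auto

lemma SUP_inf: assumes "\<And>n::nat. \<exists>A\<in>S. ennreal (real n) \<le> g A"
  shows "(SUP A\<in>S. g A) = (\<infinity>::ennreal)"
proof (rule ccontr)
  assume "(SUP A\<in>S. g A) \<noteq> \<infinity>"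
  then obtain r where r: "(SUP A\<in>S. g A) = ennreal r" "0 \<le> r"
    by (metis ennreal_cases infinity_ennreal_def)
  obtain n :: nat where n: "real n > r" using reals_Archimedean2 by blast
  obtain A where A: "A \<in> S" "ennreal (real n) \<le> g A" using assms by blast
  have "g A \<le> ennreal r" using A(1) r(1) by (metis SUP_upper)
  hence "ennreal (real n) \<le> ennreal r" using A(2) by simp
  thus False using n r(2) by simp
qed

lemma SUP_fin: assumes "\<And>A. A \<in> S \<Longrightarrow> g A \<le> ennreal r"
  shows "(SUP A\<in>S. g A) \<noteq> (\<infinity>::ennreal)"
proof -
  have "(SUP A\<in>S. g A) \<le> ennreal r" using assms by (rule SUP_least)
  also have "\<dots> < \<infinity>" by simp
  finally have "(SUP A\<in>S. g A) < \<infinity>" .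
  thus ?thesis by (metis infinity_ennreal_def less_irrefl)
qed

lemma avg_le: assumes pm: "pos m" "finite A" "A \<noteq> {}" "SS f m A \<le> r * MM m A"
  shows "avgN f m A \<le> ennreal r"
proof -
  have "0 < MM m A" by (rule MM_pos[OF assms(1-3)])
  hence "SS f m A / MM m A \<le> r" using assms(4) by (simp add: divide_le_eq)
  thus ?thesis unfolding avgN_def by (rule ennreal_leI)
qed

lemma avg_ge: assumes pm: "pos m" "finite A" "A \<noteq> {}" "r * MM m A \<le> SS f m A"
  shows "ennreal r \<le> avgN f m A"
proof -
  have "0 < MM m A" by (rule MM_pos[OF assms(1-3)])
  hence "r \<le> SS f m A / MM m A" using assms(4) by (simp add: le_divide_eq)
  thus ?thesis unfolding avgN_def by (rule ennreal_leI)
qed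

lemma hQ_Fn1: assumes gc: "good c" and one: "\<And>k i. c k i = 1"
  shows "A \<in> Fn c i \<Longrightarrow> A \<subseteq> {..<2*K+2} \<Longrightarrow> z \<in> A \<Longrightarrow> lvl z = K \<Longrightarrow> lvl i < K \<Longrightarrow> {..<2*K} \<subseteq> A"
proof -
  assume A: "A \<in> Fn c i" and h: "A \<subseteq> {..<2*K+2}" "z \<in> A" "lvl z = K" "lvl i < K"
  obtain k s where s: "0 < s" "A = NB c k s" "i \<in> A" using Fn_elim[OF A] by blast
  have "{..<2*K} \<subseteq> NB c k s \<or> (lvl k = K \<and> s \<le> 2*K+3)"
    by (rule sandwich[OF gc s(1)]) (use h s in auto)
  thus ?thesis
  proof
    assume "{..<2*K} \<subseteq> NB c k s" thus ?thesis using s by simp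
  next
    assume k: "lvl k = K \<and> s \<le> 2*K+3"
    have ik: "i \<noteq> k" using k h(4) by auto
    have "lvl i \<le> K \<and> 2*K+2 + c k i < s" by (rule small[OF gc conjunct1[OF k] conjunct2[OF k]]) (use s ik in auto)
    thus ?thesis using k one[of k i] by linarith
  qed
qed

definition c1 :: "nat \<Rightarrow> nat \<Rightarrow> real" where "c1 = cz (\<lambda>_ _. False)"

lemma c1_one: "c1 k i = 1" by (simp add: c1_def cz_def)

lemma TT_nc: "dichotomy XX (rh c1) (muN (mT TA)) (maxnc XX (rh c1) (muN (mT TA)))"
proof (rule dich_holds[OF good_cz[of "\<lambda>_ _. False", folded c1_def] posA])
  fix f i j assume inf: "maxnc XX (rh c1) (muN (mT TA)) f (real i) = \<infinity>"
  have gc: "good c1" unfolding c1_def by (rule good_cz)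
  show "maxnc XX (rh c1) (muN (mT TA)) f (real j) = \<infinity>"
    unfolding maxnc_eq[OF gc posA]
  proof (rule holdA[where F="Fn c1", OF gc posA massA])
    fix i A assume "A \<in> Fn c1 i" thus "\<exists>k s. 0 < s \<and> A = NB c1 k s \<and> i \<in> A" by (rule Fn_elim)
  next
    fix j and K :: nat show "NB c1 j (2*K+4) \<in> Fn c1 j" by (rule Fn_in) (simp_all add: i_in_NB)
  next
    fix i A K z assume "A \<in> Fn c1 i" "A \<subseteq> {..<2*K+2}" "z \<in> A" "lvl z = K" "lvl i < K"
    thus "{..<2*K} \<subseteq> A" by (rule hQ_Fn1[OF gc c1_one])
  next
    show "(SUP A\<in>Fn c1 i. avgN f (mT TA) A) = \<infinity>" using inf unfolding maxnc_eq[OF gc posA] .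
  qed
qed

lemma TT_c: "dichotomy XX (rh c1) (muN (mT TA)) (maxc XX (rh c1) (muN (mT TA)))"
proof (rule dich_holds[OF good_cz[of "\<lambda>_ _. False", folded c1_def] posA])
  fix f i j assume inf: "maxc XX (rh c1) (muN (mT TA)) f (real i) = \<infinity>"
  have gc: "good c1" unfolding c1_def by (rule good_cz)
  show "maxc XX (rh c1) (muN (mT TA)) f (real j) = \<infinity>"
    unfolding maxc_eq[OF gc posA]
    by (rule holdA_c[OF gc posA massA, of f i]) (use inf in \<open>unfold maxc_eq[OF gc posA]\<close>)
qed

lemma TT_nd: "\<not> doubling XX (rh c1) (muN (mT TA))"
  by (rule nondoubling[OF good_cz[of "\<lambda>_ _. False", folded c1_def] TA_g2 TA_gk])

lemma TT_mms: "metric_measure_space XX (rh c1) (muN (mT TA))"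
  by (rule mms[OF good_cz[of "\<lambda>_ _. False", folded c1_def] posA])



definition z2 :: "nat \<Rightarrow> nat \<Rightarrow> bool" where "z2 i j \<longleftrightarrow> i = 0 \<and> even j \<and> j \<ge> 2"
definition c2 :: "nat \<Rightarrow> nat \<Rightarrow> real" where "c2 = cz z2"
lemma gc2: "good c2" unfolding c2_def by (rule good_cz)

lemma FT_c: "dichotomy XX (rh c2) (muN (mT TA)) (maxc XX (rh c2) (muN (mT TA)))"
proof (rule dich_holds[OF gc2 posA])
  fix f i j assume inf: "maxc XX (rh c2) (muN (mT TA)) f (real i) = \<infinity>"
  show "maxc XX (rh c2) (muN (mT TA)) f (real j) = \<infinity>"
    unfolding maxc_eq[OF gc2 posA]
    by (rule holdA_c[OF gc2 posA massA, of f i]) (use inf in \<open>unfold maxc_eq[OF gc2 posA]\<close>)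
qed

definition g2 :: "nat \<Rightarrow> real" where "g2 n = (if even n then 2 ^ (n div 2) else 0)"
definition f2 :: "real \<Rightarrow> real" where "f2 x = g2 (idx x)"

lemma SS_idx: "SS (\<lambda>x. g (idx x)) m A = (\<Sum>j\<in>A. \<bar>g j\<bar> * m j)" by (simp add: SS_def)
lemma SS_f2: "SS f2 m A = (\<Sum>j\<in>A. \<bar>g2 j\<bar> * m j)"
  unfolding f2_def[abs_def] by (rule SS_idx)

lemma SS_f2K: "SS f2 (mT TA) {..<2*K+2} = 2 ^ (K+1) - 1"
  unfolding SS_f2
proof (induction K)
  case 0
  have "{..<2::nat} = {0,1}" by auto
  thus ?case by (simp add: g2_def mT_def)
next
  case (Suc K)
  have "{..<2*Suc K+2} = insert (2*K+3) (insert (2*K+2) {..<2*K+2})" by auto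
  hence "(\<Sum>j\<in>{..<2*Suc K+2}. \<bar>g2 j\<bar> * mT TA j) = \<bar>g2 (2*K+3)\<bar> * mT TA (2*K+3) + \<bar>g2 (2*K+2)\<bar> * mT TA (2*K+2) + (\<Sum>j\<in>{..<2*K+2}. \<bar>g2 j\<bar> * mT TA j)"
    by simp
  also have "\<bar>g2 (2*K+3)\<bar> = 0" by (simp add: g2_def)
  also have "\<bar>g2 (2*K+2)\<bar> = 2^(K+1)" by (simp add: g2_def)
  also have "mT TA (2*K+2) = 1" by (simp add: mT_even)
  finally show ?case using Suc by simp
qed

lemma FT_x0: "maxnc XX (rh c2) (muN (mT TA)) f2 (real 0) = \<infinity>"
  unfolding maxnc_eq[OF gc2 posA]
proof (rule SUP_inf)
  fix n :: nat
  define k where "k = n + 1"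
  have k1: "k \<ge> 1" by (simp add: k_def)
  let ?s = "2 * real k + 5/2"
  have A: "NB c2 (2*k) ?s = {0, 2*k}"
  proof (intro set_eqI iffI)
    fix w assume w: "w \<in> NB c2 (2*k) ?s"
    show "w \<in> {0, 2*k}"
    proof (rule ccontr)
      assume nw: "w \<notin> {0, 2*k}"
      hence "dd c2 (2*k) w = 2 * real (max k (lvl w)) + 2 + c2 (2*k) w" using dd_ne[of "2*k" w c2] by (simp add: lvl_def)
      moreover have "dd c2 (2*k) w < ?s" using w by (simp add: NB_def)
      ultimately have "c2 (2*k) w < 1" by linarith
      hence "z2 (2*k) w \<or> z2 w (2*k)" unfolding c2_def by (rule cz_lt)
      thus False using nw k1 by (auto simp: z2_def)
    qed
  next
    fix w assume "w \<in> {0, 2*k}"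
    moreover have "dd c2 (2*k) 0 < ?s"
    proof -
      have "c2 (2*k) 0 = 0" unfolding c2_def by (rule cz_0') (use k1 in \<open>simp add: z2_def\<close>)
      thus ?thesis using dd_ne[of "2*k" 0 c2] k1 by (simp add: lvl_def)
    qed
    ultimately show "w \<in> NB c2 (2*k) ?s" by (auto simp: NB_def)
  qed
  have inF: "NB c2 (2*k) ?s \<in> Fn c2 0" by (rule Fn_in) (auto simp: A)
  have "real n * MM (mT TA) {0, 2*k} \<le> SS f2 (mT TA) {0, 2*k}"
  proof -
    have "MM (mT TA) {0, 2*k} = 2" using k1 by (simp add: MM_def mT_even)
    moreover have "SS f2 (mT TA) {0, 2*k} = 1 + 2^k" using k1 by (simp add: SS_f2 g2_def mT_even)
    moreover have "real n < 2 ^ n"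
    proof (induction n)
      case (Suc n)
      have "(1::real) \<le> 2 ^ n" by simp
      thus ?case using Suc.IH by (simp; linarith)
    qed simp
    hence "real n * 2 \<le> 1 + 2 * 2 ^ n" by linarith
    ultimately show ?thesis by (simp add: k_def)
  qed
  hence "ennreal (real n) \<le> avgN f2 (mT TA) {0, 2*k}" by (intro avg_ge[OF posA]) auto
  thus "\<exists>A\<in>Fn c2 0. ennreal (real n) \<le> avgN f2 (mT TA) A" using inF A by metis
qed

lemma FT_y0: "maxnc XX (rh c2) (muN (mT TA)) f2 (real 1) \<noteq> \<infinity>"
  unfolding maxnc_eq[OF gc2 posA]
proof (rule SUP_fin[of _ _ 2])
  fix A assume AF: "A \<in> Fn c2 1"
  obtain k s where s: "0 < s" "A = NB c2 k s" "1 \<in> A" using Fn_elim[OF AF] by blast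
  have fA: "finite A" "A \<noteq> {}" using s NB_finite[OF gc2] by auto
  obtain K z where K: "A \<subseteq> {..<2*K+2}" "z \<in> A" "lvl z = K" using maxlvl[OF fA] by blast
  have SSle: "SS f2 (mT TA) A \<le> 2 ^ (K+1) - 1"
    using SS_mono[OF posA _ K(1), of f2] SS_f2K[of K] by simp
  have MMge: "2 ^ K \<le> MM (mT TA) A"
  proof (cases "K = 0")
    case True
    have "mT TA 1 \<le> MM (mT TA) A" by (rule MM_single[OF posA fA(1) s(3)])
    thus ?thesis using True by (simp add: mT_def)
  next
    case False
    hence K1: "K \<ge> 1" by simp
    have "{..<2*K} \<subseteq> NB c2 k s \<or> (lvl k = K \<and> s \<le> 2*K+3)"
      by (rule sandwich[OF gc2 s(1)]) (use K s in auto)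
    thus ?thesis
    proof
      assume sub: "{..<2*K} \<subseteq> NB c2 k s"
      have "MM (mT TA) {..<2*K} = TA K" by (rule MM_lev[of TA, OF TA1 K1])
      thus ?thesis using MM_mono[OF posA fA(1), of "{..<2*K}"] sub s(2) by (simp add: TA_def)
    next
      assume k: "lvl k = K \<and> s \<le> 2*K+3"
      have ik: "1 \<noteq> k" using k K1 by (auto simp: lvl_def)
      have "lvl 1 \<le> K \<and> 2*K+2 + c2 k 1 < s" by (rule small[OF gc2 conjunct1[OF k] conjunct2[OF k]]) (use s ik in auto)
      hence "c2 k 1 < 1" using k by linarith
      hence "z2 k 1 \<or> z2 1 k" unfolding c2_def by (rule cz_lt)
      thus ?thesis by (simp add: z2_def)
    qed
  qed
  have "SS f2 (mT TA) A \<le> 2 * MM (mT TA) A" using SSle MMge by simp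
  thus "avgN f2 (mT TA) A \<le> ennreal 2" by (rule avg_le[OF posA fA])
qed

lemma FT_nc: "\<not> dichotomy XX (rh c2) (muN (mT TA)) (maxnc XX (rh c2) (muN (mT TA)))"
  by (rule dich_fails[where T="maxnc XX (rh c2) (muN (mT TA))", OF gc2 posA FT_x0 FT_y0])

lemma FT_nd: "\<not> doubling XX (rh c2) (muN (mT TA))"
  by (rule nondoubling[OF gc2 TA_g2 TA_gk])

lemma FT_mms: "metric_measure_space XX (rh c2) (muN (mT TA))"
  by (rule mms[OF gc2 posA])



definition g3 :: "nat \<Rightarrow> real" where "g3 n = (if even n then real (n div 2) * fact (n div 2) else 0)"
definition f3 :: "real \<Rightarrow> real" where "f3 x = g3 (idx x)"
lemma SS_f3: "SS f3 m A = (\<Sum>j\<in>A. \<bar>g3 j\<bar> * m j)"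
  unfolding f3_def[abs_def] by (rule SS_idx)

lemma SS_f3K: "SS f3 (mT TB) {..<2*K+2} = fact (K+1) - 1"
  unfolding SS_f3
proof (induction K)
  case 0
  have "{..<2::nat} = {0,1}" by auto
  thus ?case by (simp add: g3_def mT_def)
next
  case (Suc K)
  have "{..<2*Suc K+2} = insert (2*K+3) (insert (2*K+2) {..<2*K+2})" by auto
  hence "(\<Sum>j\<in>{..<2*Suc K+2}. \<bar>g3 j\<bar> * mT TB j) = \<bar>g3 (2*K+3)\<bar> * mT TB (2*K+3) + \<bar>g3 (2*K+2)\<bar> * mT TB (2*K+2) + (\<Sum>j\<in>{..<2*K+2}. \<bar>g3 j\<bar> * mT TB j)"
    by simp
  also have "\<bar>g3 (2*K+3)\<bar> = 0" by (simp add: g3_def)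
  also have "\<bar>g3 (2*K+2)\<bar> = real (K+1) * fact (K+1)" by (simp add: g3_def)
  also have "mT TB (2*K+2) = 1" by (simp add: mT_even)
  finally show ?case using Suc by (simp add: algebra_simps)
qed

lemma MMB: "K \<ge> 1 \<Longrightarrow> MM (mT TB) {..<2*K} = 2 * fact K"
  using MM_lev[of TB, OF TB1] by (simp add: TB_def)

lemma mTB_odd: "K \<ge> 1 \<Longrightarrow> mT TB (2*K+1) = 2 * real K * fact K - 1"
  using mT_odd[of K TB] TB_diff[of K] by simp

lemma cfail:
  assumes gc: "good c" and h0: "\<And>k. k \<ge> 1 \<Longrightarrow> c 0 (2*k) = 0"
    and h0': "\<And>k. k \<ge> 1 \<Longrightarrow> c 0 (2*k+1) = 1" and h1: "\<And>k. k \<ge> 1 \<Longrightarrow> c 1 (2*k+1) = 0"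
  shows "\<not> dichotomy XX (rh c) (muN (mT TB)) (maxc XX (rh c) (muN (mT TB)))"
proof (rule dich_fails[where T="maxc XX (rh c) (muN (mT TB))", OF gc posB])
  show "maxc XX (rh c) (muN (mT TB)) f3 (real 0) = \<infinity>"
    unfolding maxc_eq[OF gc posB]
  proof (rule SUP_inf)
    fix n :: nat
    define k where "k = 3*n+1"
    have k1: "k \<ge> 1" by (simp add: k_def)
    let ?s = "2 * real k + 5/2"
    let ?A = "NB c 0 ?s"
    have fA: "finite ?A" "?A \<noteq> {}" using NB_finite[OF gc] i_in_NB[of ?s 0 c] by auto
    have sub: "?A \<subseteq> {..<2*k+1}"
    proof
      fix w assume w: "w \<in> ?A"
      show "w \<in> {..<2*k+1}"
      proof (cases "w = 0")
        case False
        have d: "dd c 0 w = 2 * real (lvl w) + 2 + c 0 w" using dd_ne[of 0 w c] False by (simp add: lvl_def)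
        have c0: "0 \<le> c 0 w" using gc by (simp add: good_def)
        have lt: "dd c 0 w < ?s" using w by (simp add: NB_def)
        have "lvl w \<le> k" using d c0 lt by linarith
        moreover have "w \<noteq> 2*k+1"
        proof
          assume "w = 2*k+1"
          hence "c 0 w = 1" "lvl w = k" using h0'[OF k1] by (auto simp: lvl_def)
          thus False using d lt by simp
        qed
        ultimately show ?thesis by (auto simp: lvl_le)
      qed simp
    qed
    have kin: "2*k \<in> ?A"
    proof -
      have "dd c 0 (2*k) = 2 * real k + 2" using dd_ne[of 0 "2*k" c] h0[OF k1] k1 by (simp add: lvl_def)
      thus ?thesis by (simp add: NB_def)
    qed
    have MMle: "MM (mT TB) ?A \<le> 2 * fact k + 1"
    proof -
      have "MM (mT TB) ?A \<le> MM (mT TB) {..<2*k+1}" by (rule MM_mono[OF posB _ sub]) simp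
      also have "{..<2*k+1} = insert (2*k) {..<2*k}" by auto
      also have "MM (mT TB) \<dots> = 1 + MM (mT TB) {..<2*k}" by (simp add: MM_def mT_even)
      finally show ?thesis using MMB[OF k1] by simp
    qed
    have SSge: "real k * fact k \<le> SS f3 (mT TB) ?A"
    proof -
      have "SS f3 (mT TB) {2*k} \<le> SS f3 (mT TB) ?A" by (rule SS_mono[OF posB fA(1)]) (use kin in simp)
      moreover have "SS f3 (mT TB) {2*k} = real k * fact k" by (simp add: SS_f3 g3_def mT_even)
      ultimately show ?thesis by simp
    qed
    have "real n * MM (mT TB) ?A \<le> SS f3 (mT TB) ?A"
    proof -
      have f1: "(1::real) \<le> fact k" by simp
      have "real n * MM (mT TB) ?A \<le> real n * (2 * fact k + 1)" using MMle by (simp add: mult_left_mono)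
      also have "\<dots> \<le> real n * (3 * fact k)" using f1 by (simp add: mult_left_mono)
      also have "\<dots> \<le> real k * fact k" unfolding k_def by (simp add: algebra_simps)
      finally show ?thesis using SSge by linarith
    qed
    hence "ennreal (real n) \<le> avgN f3 (mT TB) ?A" by (rule avg_ge[OF posB fA])
    moreover have "?A \<in> Fc c 0" by (rule Fc_in) simp
    ultimately show "\<exists>A\<in>Fc c 0. ennreal (real n) \<le> avgN f3 (mT TB) A" by blast
  qed
  show "maxc XX (rh c) (muN (mT TB)) f3 (real 1) \<noteq> \<infinity>"
    unfolding maxc_eq[OF gc posB]
  proof (rule SUP_fin[of _ _ 1])
    fix A assume AF: "A \<in> Fc c 1"
    obtain s where s: "0 < s" "A = NB c 1 s" using Fc_elim[OF AF] by blast
    have fA: "finite A" "A \<noteq> {}" using s NB_finite[OF gc] i_in_NB[of s 1 c] by auto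
    obtain K z where K: "A \<subseteq> {..<2*K+2}" "z \<in> A" "lvl z = K" using maxlvl[OF fA] by blast
    have SSle: "SS f3 (mT TB) A \<le> fact (K+1) - 1"
      using SS_mono[OF posB _ K(1), of f3] SS_f3K[of K] by simp
    show "avgN f3 (mT TB) A \<le> ennreal 1"
    proof (rule avg_le[OF posB fA])
      show "SS f3 (mT TB) A \<le> 1 * MM (mT TB) A"
      proof (cases "K = 0")
        case True
        have "0 \<le> MM (mT TB) A" using MM_pos[OF posB fA] by simp
        thus ?thesis using SSle True by simp
      next
        case False
        hence K1: "K \<ge> 1" by simp
        have z1: "z \<noteq> 1" using K(3) K1 by (auto simp: lvl_def)
        have dz: "dd c 1 z = 2 * real K + 2 + c 1 z" using dd_ne[of 1 z c] z1 K(3) by (simp add: lvl_def)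
        have "dd c 1 z < s" using K(2) s(2) by (simp add: NB_def)
        moreover have "0 \<le> c 1 z" using gc by (simp add: good_def)
        moreover have "dd c 1 (2*K+1) = 2 * real K + 2" using dd_ne[of 1 "2*K+1" c] h1[OF K1] K1 by (simp add: lvl_def)
        ultimately have "2*K+1 \<in> A" using dz s(2) by (simp add: NB_def)
        hence "mT TB (2*K+1) \<le> MM (mT TB) A" by (rule MM_single[OF posB fA(1)])
        hence MMge: "2 * real K * fact K - 1 \<le> MM (mT TB) A" using mTB_odd[OF K1] by simp
        have "fact (K+1) = (real K + 1) * (fact K :: real)" by (simp add: algebra_simps)
        moreover have "(real K + 1) * fact K \<le> 2 * real K * (fact K :: real)"
          using K1 by (intro mult_right_mono) auto
        ultimately show ?thesis using SSle MMge by linarith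
      qed
    qed
  qed
qed

definition z3 :: "nat \<Rightarrow> nat \<Rightarrow> bool" where
  "z3 i j \<longleftrightarrow> (i = 0 \<and> even j \<and> j \<ge> 2) \<or> (i = 1 \<and> j \<ge> 2) \<or> (even i \<and> i \<ge> 2 \<and> j = i + 1)"
definition c3 :: "nat \<Rightarrow> nat \<Rightarrow> real" where "c3 = cz z3"
lemma gc3: "good c3" unfolding c3_def by (rule good_cz)

lemma TF_c: "\<not> dichotomy XX (rh c3) (muN (mT TB)) (maxc XX (rh c3) (muN (mT TB)))"
  by (rule cfail[OF gc3]) (auto simp: c3_def cz_def z3_def)

definition z4 :: "nat \<Rightarrow> nat \<Rightarrow> bool" where
  "z4 i j \<longleftrightarrow> (i = 0 \<and> even j \<and> j \<ge> 2) \<or> (i = 1 \<and> odd j \<and> j \<ge> 3)"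
definition c4 :: "nat \<Rightarrow> nat \<Rightarrow> real" where "c4 = cz z4"
lemma gc4: "good c4" unfolding c4_def by (rule good_cz)

lemma FF_c: "\<not> dichotomy XX (rh c4) (muN (mT TB)) (maxc XX (rh c4) (muN (mT TB)))"
  by (rule cfail[OF gc4]) (auto simp: c4_def cz_def z4_def)



lemma TF_nc: "dichotomy XX (rh c3) (muN (mT TB)) (maxnc XX (rh c3) (muN (mT TB)))"
proof (rule dich_holds[OF gc3 posB])
  fix f i j assume inf: "maxnc XX (rh c3) (muN (mT TB)) f (real i) = \<infinity>"
  define M where "M = max (lvl i) (lvl j)"
  have fin: "finite A \<and> i \<in> A" if "A \<in> Fn c3 i" for A i
    using Fn_elim[OF that] NB_finite[OF gc3] by blast
  show "maxnc XX (rh c3) (muN (mT TB)) f (real j) = \<infinity>"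
    unfolding maxnc_eq[OF gc3 posB]
  proof (rule propag[OF posB, of "Fn c3" i j "{..<2*M+2}" 4])
    show "finite A \<and> i \<in> A" if "A \<in> Fn c3 i" for A using fin[OF that] .
    show "finite A \<and> A \<noteq> {}" if "A \<in> Fn c3 j" for A using fin[OF that] by blast
    show "(SUP A\<in>Fn c3 i. avgN f (mT TB) A) = \<infinity>" using inf unfolding maxnc_eq[OF gc3 posB] .
    fix A assume A: "A \<in> Fn c3 i"
    show "A \<subseteq> {..<2*M+2} \<or> (\<exists>A'\<in>Fn c3 j. A \<subseteq> A' \<and> MM (mT TB) A' \<le> 4 * MM (mT TB) A)"
    proof (cases "A \<subseteq> {..<2*M+2}")
      case True thus ?thesis by (rule disjI1)
    next
      case False
      have fA: "finite A" "A \<noteq> {}" using fin[OF A] by auto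
      obtain k s where s: "0 < s" "A = NB c3 k s" "i \<in> A" using Fn_elim[OF A] by blast
      obtain K z where K: "A \<subseteq> {..<2*K+2}" "z \<in> A" "lvl z = K" using maxlvl[OF fA] by blast
      from False obtain w where w: "w \<in> A" "w \<notin> {..<2*M+2}" by blast
      have MK: "M < K" using w K(1) by auto
      have K1: "K \<ge> 1" using MK by simp
      have MMA: "0 \<le> MM (mT TB) A" using MM_pos[OF posB fA] by simp
      have "{..<2*K} \<subseteq> NB c3 k s \<or> (lvl k = K \<and> s \<le> 2*K+3)"
        by (rule sandwich[OF gc3 s(1)]) (use K s in auto)
      thus ?thesis
      proof
        assume sub: "{..<2*K} \<subseteq> NB c3 k s"
        have "j < 2*K" using MK unfolding M_def lvl_def by auto
        hence jA: "j \<in> A" using sub s(2) by auto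
        have "A \<in> Fn c3 j" using Fn_in[OF s(1), of j c3 k] jA s(2) by simp
        thus ?thesis using MMA by (intro disjI2 bexI[of _ A]) auto
      next
        assume k: "lvl k = K \<and> s \<le> 2*K+3"
        have ik: "i \<noteq> k" using k MK unfolding M_def by auto
        have sm: "lvl i \<le> K \<and> 2*K+2 + c3 k i < s"
          by (rule small[OF gc3 conjunct1[OF k] conjunct2[OF k]]) (use s ik in auto)
        have c0: "0 \<le> c3 k i" using gc3 by (simp add: good_def)
        have hK: "2*K+1 \<in> A"
        proof (cases "k = 2*K+1")
          case True thus ?thesis using s by (simp add: i_in_NB)
        next
          case False
          hence kk: "k = 2*K" using k unfolding lvl_def by auto
          have "c3 (2*K) (2*K+1) = 0" unfolding c3_def by (rule cz_0) (use K1 in \<open>simp add: z3_def\<close>)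
          hence "dd c3 (2*K) (2*K+1) = 2 * real K + 2" using dd_ne[of "2*K" "2*K+1" c3] by (simp add: lvl_def)
          hence "dd c3 k (2*K+1) < s" using sm c0 kk by simp
          thus ?thesis using s(2) by (simp add: NB_def)
        qed
        hence "mT TB (2*K+1) \<le> MM (mT TB) A" by (rule MM_single[OF posB fA(1)])
        hence MMge: "2 * real K * fact K - 1 \<le> MM (mT TB) A" using mTB_odd[OF K1] by simp
        have jK: "lvl j \<le> K" using MK unfolding M_def by simp
        have A': "NB c3 j (2*K+4) = {..<2*K+2}" by (rule Lball[OF gc3 jK])
        have A'F: "NB c3 j (2*K+4) \<in> Fn c3 j" by (rule Fn_in) (simp_all add: i_in_NB)
        have "MM (mT TB) {..<2*(K+1)} = 2 * fact (K+1)" by (rule MMB) simp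
        hence MM': "MM (mT TB) (NB c3 j (2*K+4)) = 2 * ((real K + 1) * fact K)" unfolding A' by (simp add: algebra_simps)
        have f1: "(1::real) \<le> fact K" by simp
        have "2 * ((real K + 1) * fact K) \<le> 4 * (2 * real K * fact K - 1)"
        proof -
          have "4 * 1 \<le> (6 * real K - 2) * fact K" using K1 f1 by (intro mult_mono) auto
          thus ?thesis by (simp add: algebra_simps)
        qed
        hence X1: "MM (mT TB) (NB c3 j (2*K+4)) \<le> 4 * (2 * real K * fact K - 1)" unfolding MM' .
        have X2: "4 * (2 * real K * fact K - 1) \<le> 4 * MM (mT TB) A" using MMge by simp
        have "MM (mT TB) (NB c3 j (2*K+4)) \<le> 4 * MM (mT TB) A" using X1 X2 by (rule order_trans)
        thus ?thesis using A'F K(1) A' by (intro disjI2 bexI[of _ "NB c3 j (2*K+4)"]) auto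
      qed
    qed
  qed simp_all
qed

definition g4 :: "nat \<Rightarrow> real" where "g4 n = (if even n then fact (n div 2) else 0)"
definition f4 :: "real \<Rightarrow> real" where "f4 x = g4 (idx x)"
lemma SS_f4: "SS f4 m A = (\<Sum>j\<in>A. \<bar>g4 j\<bar> * m j)"
  unfolding f4_def[abs_def] by (rule SS_idx)

lemma SS_f4_0: "SS f4 (mT TB) {..<2} = 1"
proof -
  have "{..<2::nat} = {0,1}" by auto
  thus ?thesis by (simp add: SS_f4 g4_def mT_def)
qed

lemma SS_f4K: "K \<ge> 1 \<Longrightarrow> SS f4 (mT TB) {..<2*K+2} \<le> 2 * fact K"
  unfolding SS_f4
proof (induction K rule: dec_induct)
  case base
  have "{..<4::nat} = {0,1,2,3}" by auto
  thus ?case by (simp add: g4_def mT_def)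
next
  case (step K)
  have "{..<2*Suc K+2} = insert (2*K+3) (insert (2*K+2) {..<2*K+2})" by auto
  hence "(\<Sum>j\<in>{..<2*Suc K+2}. \<bar>g4 j\<bar> * mT TB j) = \<bar>g4 (2*K+3)\<bar> * mT TB (2*K+3) + \<bar>g4 (2*K+2)\<bar> * mT TB (2*K+2) + (\<Sum>j\<in>{..<2*K+2}. \<bar>g4 j\<bar> * mT TB j)"
    by simp
  also have "\<bar>g4 (2*K+3)\<bar> = 0" by (simp add: g4_def)
  also have "\<bar>g4 (2*K+2)\<bar> = fact (K+1)" by (simp add: g4_def)
  also have "mT TB (2*K+2) = 1" by (simp add: mT_even)
  finally have e: "(\<Sum>j\<in>{..<2*Suc K+2}. \<bar>g4 j\<bar> * mT TB j) = fact (K+1) + (\<Sum>j\<in>{..<2*K+2}. \<bar>g4 j\<bar> * mT TB j)" by simp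
  have "2 * fact K \<le> (real K + 1) * (fact K :: real)" using step(1) by (intro mult_right_mono) auto
  hence fk: "2 * fact K \<le> (fact (K+1) :: real)" by (simp add: algebra_simps)
  have IH: "(\<Sum>j\<in>{..<2*K+2}. \<bar>g4 j\<bar> * mT TB j) \<le> 2 * fact K" by (rule step.IH)
  have "(\<Sum>j\<in>{..<2*Suc K+2}. \<bar>g4 j\<bar> * mT TB j) \<le> 2 * fact (K+1)" using e IH fk by linarith
  thus ?case by simp
qed

lemma FF_x0: "maxnc XX (rh c4) (muN (mT TB)) f4 (real 0) = \<infinity>"
  unfolding maxnc_eq[OF gc4 posB]
proof (rule SUP_inf)
  fix n :: nat
  define k where "k = 2*n + 1"
  have k1: "k \<ge> 1" by (simp add: k_def)
  let ?s = "2 * real k + 5/2"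
  have A: "NB c4 (2*k) ?s = {0, 2*k}"
  proof (intro set_eqI iffI)
    fix w assume w: "w \<in> NB c4 (2*k) ?s"
    show "w \<in> {0, 2*k}"
    proof (rule ccontr)
      assume nw: "w \<notin> {0, 2*k}"
      hence "dd c4 (2*k) w = 2 * real (max k (lvl w)) + 2 + c4 (2*k) w" using dd_ne[of "2*k" w c4] by (simp add: lvl_def)
      moreover have "dd c4 (2*k) w < ?s" using w by (simp add: NB_def)
      ultimately have "c4 (2*k) w < 1" by linarith
      hence "z4 (2*k) w \<or> z4 w (2*k)" unfolding c4_def by (rule cz_lt)
      thus False using nw k1 by (auto simp: z4_def)
    qed
  next
    fix w assume "w \<in> {0, 2*k}"
    moreover have "dd c4 (2*k) 0 < ?s"
    proof -
      have "c4 (2*k) 0 = 0" unfolding c4_def by (rule cz_0') (use k1 in \<open>simp add: z4_def\<close>)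
      thus ?thesis using dd_ne[of "2*k" 0 c4] k1 by (simp add: lvl_def)
    qed
    ultimately show "w \<in> NB c4 (2*k) ?s" by (auto simp: NB_def)
  qed
  have inF: "NB c4 (2*k) ?s \<in> Fn c4 0" by (rule Fn_in) (auto simp: A)
  have "real n * MM (mT TB) {0, 2*k} \<le> SS f4 (mT TB) {0, 2*k}"
  proof -
    have "MM (mT TB) {0, 2*k} = 2" using k1 by (simp add: MM_def mT_even)
    moreover have "SS f4 (mT TB) {0, 2*k} = 1 + fact k" using k1 by (simp add: SS_f4 g4_def mT_even)
    moreover have "real k \<le> fact k"
    proof -
      have "real k \<le> real (fact k :: nat)" using fact_ge_self[of k] by (simp only: of_nat_le_iff)
      thus ?thesis by (simp only: of_nat_fact)
    qed
    moreover have "real k = 2 * real n + 1" by (simp add: k_def)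
    ultimately show ?thesis by simp
  qed
  hence "ennreal (real n) \<le> avgN f4 (mT TB) {0, 2*k}" by (intro avg_ge[OF posB]) auto
  thus "\<exists>A\<in>Fn c4 0. ennreal (real n) \<le> avgN f4 (mT TB) A" using inF A by metis
qed

lemma FF_y0: "maxnc XX (rh c4) (muN (mT TB)) f4 (real 1) \<noteq> \<infinity>"
  unfolding maxnc_eq[OF gc4 posB]
proof (rule SUP_fin[of _ _ 1])
  fix A assume AF: "A \<in> Fn c4 1"
  obtain k s where s: "0 < s" "A = NB c4 k s" "1 \<in> A" using Fn_elim[OF AF] by blast
  have fA: "finite A" "A \<noteq> {}" using s NB_finite[OF gc4] by auto
  obtain K z where K: "A \<subseteq> {..<2*K+2}" "z \<in> A" "lvl z = K" using maxlvl[OF fA] by blast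
  have SSle: "SS f4 (mT TB) A \<le> SS f4 (mT TB) {..<2*K+2}" by (rule SS_mono[OF posB _ K(1)]) simp
  have m1: "mT TB 1 \<le> MM (mT TB) A" by (rule MM_single[OF posB fA(1) s(3)])
  have m1': "mT TB 1 = 1" by (simp add: mT_def)
  show "avgN f4 (mT TB) A \<le> ennreal 1"
  proof (rule avg_le[OF posB fA])
    show "SS f4 (mT TB) A \<le> 1 * MM (mT TB) A"
    proof (cases "K = 0")
      case True
      have e: "{..<2*K+2} = {..<2::nat}" using True by simp
      have "SS f4 (mT TB) A \<le> 1" using SSle[unfolded e] SS_f4_0 by linarith
      thus ?thesis using m1 m1' by simp
    next
      case False
      hence K1: "K \<ge> 1" by simp
      have "{..<2*K} \<subseteq> NB c4 k s \<or> (lvl k = K \<and> s \<le> 2*K+3)"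
        by (rule sandwich[OF gc4 s(1)]) (use K s in auto)
      thus ?thesis
      proof
        assume sub: "{..<2*K} \<subseteq> NB c4 k s"
        have "MM (mT TB) {..<2*K} \<le> MM (mT TB) A" using MM_mono[OF posB fA(1), of "{..<2*K}"] sub s(2) by simp
        thus ?thesis using SSle SS_f4K[OF K1] MMB[OF K1] by simp
      next
        assume k: "lvl k = K \<and> s \<le> 2*K+3"
        have k2: "k \<ge> 2" using k K1 by (auto simp: lvl_def)
        have ik: "1 \<noteq> k" using k2 by auto
        have "lvl 1 \<le> K \<and> 2*K+2 + c4 k 1 < s" by (rule small[OF gc4 conjunct1[OF k] conjunct2[OF k]]) (use s ik in auto)
        hence "c4 k 1 < 1" using k by linarith
        hence "z4 k 1 \<or> z4 1 k" unfolding c4_def by (rule cz_lt)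
        hence ko: "odd k" using k2 by (auto simp: z4_def)
        have "A \<subseteq> {k, 1}"
        proof
          fix w assume w: "w \<in> A"
          show "w \<in> {k, 1}"
          proof (cases "w = k")
            case False
            have "lvl w \<le> K \<and> 2*K+2 + c4 k w < s" by (rule small[OF gc4 conjunct1[OF k] conjunct2[OF k]]) (use s w False in auto)
            hence "c4 k w < 1" using k by linarith
            hence "z4 k w \<or> z4 w k" unfolding c4_def by (rule cz_lt)
            thus ?thesis using k2 ko by (auto simp: z4_def)
          qed simp
        qed
        hence "SS f4 (mT TB) A \<le> SS f4 (mT TB) {k, 1}" by (intro SS_mono[OF posB]) simp_all
        also have "SS f4 (mT TB) {k, 1} = 0" using ko k2 by (simp add: SS_f4 g4_def)
        finally show ?thesis using MM_pos[OF posB fA] by simp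
      qed
    qed
  qed
qed

lemma FF_nc: "\<not> dichotomy XX (rh c4) (muN (mT TB)) (maxnc XX (rh c4) (muN (mT TB)))"
  by (rule dich_fails[where T="maxnc XX (rh c4) (muN (mT TB))", OF gc4 posB FF_x0 FF_y0])

theorem theorem6p1p1:
  shows "\<forall>a b :: bool. \<exists>(X::real set) (rho::real \<Rightarrow> real \<Rightarrow> real) (mu::real measure).
           metric_measure_space X rho mu \<and> \<not> doubling X rho mu \<and>
           (dichotomy X rho mu (maxnc X rho mu) \<longleftrightarrow> a) \<and>
           (dichotomy X rho mu (maxc X rho mu) \<longleftrightarrow> b)"
proof (intro allI)
  fix a b :: bool
  show "\<exists>(X::real set) (rho::real \<Rightarrow> real \<Rightarrow> real) (mm::real measure).
           metric_measure_space X rho mm \<and> \<not> doubling X rho mm \<and>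
           (dichotomy X rho mm (maxnc X rho mm) \<longleftrightarrow> a) \<and>
           (dichotomy X rho mm (maxc X rho mm) \<longleftrightarrow> b)"
  proof (cases a; cases b)
    assume "a" "b"
    thus ?thesis using TT_mms TT_nd TT_nc TT_c by blast
  next
    assume "\<not> a" "b"
    thus ?thesis using FT_mms FT_nd FT_nc FT_c by blast
  next
    assume "a" "\<not> b"
    thus ?thesis using mms[OF gc3 posB] nondoubling[OF gc3 TB_g2 TB_gk] TF_nc TF_c by blast
  next
    assume "\<not> a" "\<not> b"
    thus ?thesis using mms[OF gc4 posB] nondoubling[OF gc4 TB_g2 TB_gk] FF_nc FF_c by blast
  qed
qed


end
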